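(* Let $\mathbf{X}\in\mathbb{R}^{n\times p}$ and for each $k\in\{1,\dots,p\}$ let $\mathcal{O}_k\subseteq\{1,\dots,n\}$ be a nonempty set of row indices, with $\mathbf{X}_{\mathcal{O}_k}$ the submatrix of $\mathbf{X}$ with rows in $\mathcal{O}_k$. Let $\pi$ be a permutation of $\{1,\dots,p\}$ with permutation matrix $P$ (whose $i$-th row is $e_{\pi(i)}^\top$), let $B=(\beta_1,\dots,\beta_p)\in\mathbb{R}^{p\times p}$ be strictly lower triangular with columns $\beta_j$, and let $\omega_1,\dots,\omega_p>0$. Define $$\ell_{\mathcal{O}}=\sum_{j=1}^p\left[\frac1{2\omega_j^2}\left\|\mathbf{X}_{\mathcal{O}_{\pi(j)},\pi(j)}-\mathbf{X}_{\mathcal{O}_{\pi(j)}}P^\top\beta_j\right\|^2+\frac12|\mathcal{O}_{\pi(j)}|\log\omega_j^2\right],$$ where $\mathbf{X}_{\mathcal{O}_{\pi(j)},\pi(j)}$ is column $\pi(j)$ of $\mathbf{X}_{\mathcal{O}_{\pi(j)}}$. Let $L_j=(e_j-\beta_j)/\omega_j$, $L=(L_1,\dots,L_p)$, and $\widehat\Sigma^{j}=\frac1{|\mathcal{O}_{\pi(j)}|}\mathbf{X}_{\mathcal{O}_{\pi(j)}}^\top\mathbf{X}_{\mathcal{O}_{\pi(j)}}$. Then $L\in\mathcal{L}_p$ and $$\ell_{\mathcal{O}}=\sum_{j=1}^p|\mathcal{O}_{\pi(j)}|\,\mathcal{L}_{\mathrm{chol}}\!\left(L_j;P\widehat\Sigma^jP^\top\right)=\sum_{j=1}^p|\mathcal{O}_{\pi(j)}|\left[\frac12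 L_j^\top P\widehat\Sigma^jP^\top L_j-\log L_{jj}\right].$$
   Context: $\{e_1,\dots,e_p\}$ is the canonical basis of $\mathbb{R}^p$; $\mathcal{L}_p$ is the set of $p\times p$ lower triangular matrices with positive diagonal. For a column vector $L_j$, $\mathcal{L}_{\mathrm{chol}}(L_j;A):=\frac12\operatorname{tr}(AL_jL_j^\top)-\log|L_j|$ with the convention $|L_j|:=L_{jj}$. Here $\mathcal{O}_k$ is the set of observations in which variable $k$ is not under experimental intervention, and $\ell_{\mathcal{O}}$ is the negative log-likelihood (up to parameter-free terms) of experimental data from a Gaussian linear structural equation model. *)

theory Defs
  imports "HOL-Analysis.Analysis"
begin

text \<open>Matrices are represented as functions nat \<Rightarrow> nat \<Rightarrow> real (row, column),
  vectors as nat \<Rightarrow> real, with explicit dimensions; indices are 0-based: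
  rows of X range over {..<n}, variables over {..<p}.\<close>

definition mmult :: "nat \<Rightarrow> (nat \<Rightarrow> nat \<Rightarrow> real) \<Rightarrow> (nat \<Rightarrow> nat \<Rightarrow> real) \<Rightarrow> (nat \<Rightarrow> nat \<Rightarrow> real)" where
  "mmult m A B = (\<lambda>i j. \<Sum>k<m. A i k * B k j)"

definition mtransp :: "(nat \<Rightarrow> nat \<Rightarrow> real) \<Rightarrow> (nat \<Rightarrow> nat \<Rightarrow> real)" where
  "mtransp A = (\<lambda>i j. A j i)"

definition mtrace :: "nat \<Rightarrow> (nat \<Rightarrow> nat \<Rightarrow> real) \<Rightarrow> real" where
  "mtrace p A = (\<Sum>i<p. A i i)"

definition outer :: "(nat \<Rightarrow> real) \<Rightarrow> (nat \<Rightarrow> real) \<Rightarrow> (nat \<Rightarrow> nat \<Rightarrow> real)" where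
  "outer v w = (\<lambda>i j. v i * w j)"

definition mvec :: "nat \<Rightarrow> (nat \<Rightarrow> nat \<Rightarrow> real) \<Rightarrow> (nat \<Rightarrow> real) \<Rightarrow> (nat \<Rightarrow> real)" where
  "mvec m A v = (\<lambda>i. \<Sum>k<m. A i k * v k)"

definition qform :: "nat \<Rightarrow> (nat \<Rightarrow> nat \<Rightarrow> real) \<Rightarrow> (nat \<Rightarrow> real) \<Rightarrow> real" where
  "qform p A v = (\<Sum>a<p. \<Sum>b<p. v a * A a b * v b)"

definition evec :: "nat \<Rightarrow> (nat \<Rightarrow> real)" where
  "evec j = (\<lambda>i. if i = j then 1 else 0)"

definition col :: "(nat \<Rightarrow> nat \<Rightarrow> real) \<Rightarrow> nat \<Rightarrow> (nat \<Rightarrow> real)" where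
  "col A j = (\<lambda>i. A i j)"

definition perm_mat :: "(nat \<Rightarrow> nat) \<Rightarrow> (nat \<Rightarrow> nat \<Rightarrow> real)" where
  "perm_mat \<pi> = (\<lambda>i k. if k = \<pi> i then 1 else 0)"

definition lower_pos :: "nat \<Rightarrow> (nat \<Rightarrow> nat \<Rightarrow> real) set" where
  "lower_pos p = {L. (\<forall>i<p. \<forall>j<p. i < j \<longrightarrow> L i j = 0) \<and> (\<forall>j<p. L j j > 0)}"

definition strictly_lower :: "nat \<Rightarrow> (nat \<Rightarrow> nat \<Rightarrow> real) \<Rightarrow> bool" where
  "strictly_lower p B \<longleftrightarrow> (\<forall>i<p. \<forall>j<p. i \<le> j \<longrightarrow> B i j = 0)"

text \<open>L_chol(L_j; A) = 1/2 tr(A L_j L_j^T) - log |L_j|, with |L_j| := L_jj.\<close>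
definition Lchol :: "nat \<Rightarrow> (nat \<Rightarrow> real) \<Rightarrow> nat \<Rightarrow> (nat \<Rightarrow> nat \<Rightarrow> real) \<Rightarrow> real" where
  "Lchol p v j A = 1/2 * mtrace p (mmult p A (outer v v)) - ln (v j)"

definition Sigma_hat :: "(nat \<Rightarrow> nat \<Rightarrow> real) \<Rightarrow> nat set \<Rightarrow> (nat \<Rightarrow> nat \<Rightarrow> real)" where
  "Sigma_hat X Obs = (\<lambda>k l. (1 / real (card Obs)) * (\<Sum>r\<in>Obs. X r k * X r l))"

definition ell_O :: "nat \<Rightarrow> (nat \<Rightarrow> nat \<Rightarrow> real) \<Rightarrow> (nat \<Rightarrow> nat set) \<Rightarrow> (nat \<Rightarrow> nat)
    \<Rightarrow> (nat \<Rightarrow> nat \<Rightarrow> real) \<Rightarrow> (nat \<Rightarrow> real) \<Rightarrow> real" where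
  "ell_O p X Obs \<pi> B \<omega> =
     (\<Sum>j<p. 1 / (2 * (\<omega> j)\<^sup>2) *
        (\<Sum>r\<in>Obs (\<pi> j). (X r (\<pi> j) - mvec p X (mvec p (mtransp (perm_mat \<pi>)) (col B j)) r)\<^sup>2)
      + 1/2 * real (card (Obs (\<pi> j))) * ln ((\<omega> j)\<^sup>2))"

end

theory Submission
  imports Defs
begin

lemma mvec_perm:
  assumes perm: "\<pi> permutes {..<p}"
  shows "mvec p X (mvec p (mtransp (perm_mat \<pi>)) (col B j)) r = (\<Sum>m<p. X r (\<pi> m) * B m j)"
proof -
  have pm: "\<And>m. m < p \<Longrightarrow> \<pi> m < p" using permutes_in_image[OF perm] by auto
  have "mvec p X (mvec p (mtransp (perm_mat \<pi>)) (col B j)) r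
      = (\<Sum>k<p. \<Sum>m<p. (if k = \<pi> m then X r k * B m j else 0))"
    unfolding mvec_def mtransp_def perm_mat_def col_def
    by (intro sum.cong refl) (auto simp: sum_distrib_left mult_if_delta intro!: sum.cong)
  also have "\<dots> = (\<Sum>m<p. \<Sum>k<p. (if k = \<pi> m then X r k * B m j else 0))"
    by (rule sum.swap)
  also have "\<dots> = (\<Sum>m<p. X r (\<pi> m) * B m j)"
    by (rule sum.cong) (auto simp: pm)
  finally show ?thesis .
qed

lemma PSP:
  assumes perm: "\<pi> permutes {..<p}" and a: "a < p" and b: "b < p"
  shows "mmult p (mmult p (perm_mat \<pi>) S) (mtransp (perm_mat \<pi>)) a b = S (\<pi> a) (\<pi> b)"
proof -
  have pa: "\<pi> a < p" "\<pi> b < p" using permutes_in_image[OF perm] a b by auto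
  have i: "mmult p (perm_mat \<pi>) S a k = S (\<pi> a) k" for k
    unfolding mmult_def perm_mat_def using pa by (simp add: mult_if_delta)
  have "mmult p (mmult p (perm_mat \<pi>) S) (mtransp (perm_mat \<pi>)) a b
      = (\<Sum>k<p. mmult p (perm_mat \<pi>) S a k * mtransp (perm_mat \<pi>) k b)"
    by (simp add: mmult_def[of p "mmult p (perm_mat \<pi>) S"])
  also have "\<dots> = S (\<pi> a) (\<pi> b)"
    using pa by (simp only: i) (simp add: mtransp_def perm_mat_def mult.commute[of "S _ _"] mult_if_delta)
  finally show ?thesis .
qed

theorem lemma2:
  fixes n p :: nat
    and X :: "nat \<Rightarrow> nat \<Rightarrow> real"
    and Obs :: "nat \<Rightarrow> nat set"
    and \<pi> :: "nat \<Rightarrow> nat"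
    and B :: "nat \<Rightarrow> nat \<Rightarrow> real"
    and \<omega> :: "nat \<Rightarrow> real"
  assumes Obs_sub: "\<forall>k<p. Obs k \<subseteq> {..<n}"
    and Obs_ne: "\<forall>k<p. Obs k \<noteq> {}"
    and perm: "\<pi> permutes {..<p}"
    and B_lower: "strictly_lower p B"
    and \<omega>_pos: "\<forall>j<p. \<omega> j > 0"
  defines "P \<equiv> perm_mat \<pi>"
    and "L \<equiv> (\<lambda>i j. (evec j i - B i j) / \<omega> j)"
  shows "L \<in> lower_pos p
    \<and> ell_O p X Obs \<pi> B \<omega>
        = (\<Sum>j<p. real (card (Obs (\<pi> j))) *
             Lchol p (col L j) j (mmult p (mmult p P (Sigma_hat X (Obs (\<pi> j)))) (mtransp P)))
    \<and> (\<Sum>j<p. real (card (Obs (\<pi> j))) *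
             Lchol p (col L j) j (mmult p (mmult p P (Sigma_hat X (Obs (\<pi> j)))) (mtransp P)))
        = (\<Sum>j<p. real (card (Obs (\<pi> j))) *
             (1/2 * qform p (mmult p (mmult p P (Sigma_hat X (Obs (\<pi> j)))) (mtransp P)) (col L j)
              - ln (L j j)))"
proof (intro conjI)
  have Ljj: "L j j = 1 / \<omega> j" if "j < p" for j
    using B_lower that unfolding L_def strictly_lower_def evec_def by simp
  show "L \<in> lower_pos p"
    unfolding lower_pos_def using B_lower \<omega>_pos Ljj
    unfolding strictly_lower_def L_def evec_def by auto
  have tr: "mtrace p (mmult p A (outer v v)) = qform p A v" for A v
    unfolding mtrace_def mmult_def outer_def qform_def
    by (rule sum.cong[OF refl], rule sum.cong[OF refl]) simp
  show "(\<Sum>j<p. real (card (Obs (\<pi> j))) *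
             Lchol p (col L j) j (mmult p (mmult p P (Sigma_hat X (Obs (\<pi> j)))) (mtransp P)))
        = (\<Sum>j<p. real (card (Obs (\<pi> j))) *
             (1/2 * qform p (mmult p (mmult p P (Sigma_hat X (Obs (\<pi> j)))) (mtransp P)) (col L j)
              - ln (L j j)))"
    unfolding Lchol_def tr col_def by simp
  show "ell_O p X Obs \<pi> B \<omega>
        = (\<Sum>j<p. real (card (Obs (\<pi> j))) *
             Lchol p (col L j) j (mmult p (mmult p P (Sigma_hat X (Obs (\<pi> j)))) (mtransp P)))"
    unfolding ell_O_def Lchol_def tr
  proof (rule sum.cong[OF refl])
    fix j assume "j \<in> {..<p}"
    hence j: "j < p" by simp
    have pj: "\<pi> j < p" using permutes_in_image[OF perm] j by auto
    define Ob where "Ob = Obs (\<pi> j)"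
    define c where "c = real (card Ob)"
    have finO: "finite Ob" using Obs_sub pj unfolding Ob_def by (meson finite_lessThan finite_subset)
    have cpos: "c > 0" using Obs_ne pj finO unfolding c_def Ob_def by (simp add: card_gt_0_iff)
    define w where "w = \<omega> j"
    have wpos: "w > 0" using \<omega>_pos j w_def by simp
    define S where "S r = (\<Sum>m<p. X r (\<pi> m) * L m j)" for r
    have diff: "X r (\<pi> j) - mvec p X (mvec p (mtransp (perm_mat \<pi>)) (col B j)) r = w * S r" for r
    proof -
      have "(\<Sum>m<p. X r (\<pi> m) * evec j m) = X r (\<pi> j)"
        using j unfolding evec_def by (simp add: if_distrib cong: if_cong)
      moreover have "w * S r = (\<Sum>m<p. X r (\<pi> m) * evec j m) - (\<Sum>m<p. X r (\<pi> m) * B m j)"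
      proof -
        have "w * S r = (\<Sum>m<p. X r (\<pi> m) * evec j m - X r (\<pi> m) * B m j)"
          unfolding S_def L_def sum_distrib_left using wpos w_def
          by (intro sum.cong refl) (simp add: field_simps)
        thus ?thesis by (simp add: sum_subtractf)
      qed
      ultimately have "w * S r = X r (\<pi> j) - (\<Sum>m<p. X r (\<pi> m) * B m j)" by simp
      thus ?thesis using mvec_perm[OF perm] by simp
    qed
    have q: "qform p (mmult p (mmult p P (Sigma_hat X Ob)) (mtransp P)) (col L j)
        = (1 / c) * (\<Sum>r\<in>Ob. (S r)\<^sup>2)"
    proof -
      have "qform p (mmult p (mmult p P (Sigma_hat X Ob)) (mtransp P)) (col L j)
          = (\<Sum>a<p. \<Sum>b<p. L a j * ((1/c) * (\<Sum>r\<in>Ob. X r (\<pi> a) * X r (\<pi> b))) * L b j)"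
        unfolding qform_def P_def col_def
        by (intro sum.cong refl) (simp add: PSP[OF perm] Sigma_hat_def c_def)
      also have "\<dots> = (1/c) * (\<Sum>r\<in>Ob. \<Sum>a<p. \<Sum>b<p. (X r (\<pi> a) * L a j) * (X r (\<pi> b) * L b j))"
        by (simp add: sum_distrib_left sum_distrib_right mult_ac sum.swap[of _ Ob])
      also have "\<dots> = (1/c) * (\<Sum>r\<in>Ob. (S r)\<^sup>2)"
        unfolding S_def power2_eq_square sum_product by simp
      finally show ?thesis .
    qed
    have "1 / (2 * w\<^sup>2) * (\<Sum>r\<in>Ob. (w * S r)\<^sup>2) = 1/2 * (\<Sum>r\<in>Ob. (S r)\<^sup>2)"
      using wpos by (simp add: power_mult_distrib sum_distrib_left[symmetric])
    moreover have "ln (w\<^sup>2) = 2 * ln w" using wpos by (simp add: ln_realpow)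
    moreover have "ln (L j j) = - ln w" using Ljj[OF j] wpos w_def by (simp add: ln_div)
    ultimately show "1 / (2 * (\<omega> j)\<^sup>2) *
        (\<Sum>r\<in>Obs (\<pi> j). (X r (\<pi> j) - mvec p X (mvec p (mtransp (perm_mat \<pi>)) (col B j)) r)\<^sup>2)
      + 1/2 * real (card (Obs (\<pi> j))) * ln ((\<omega> j)\<^sup>2)
      = real (card (Obs (\<pi> j))) *
        (1 / 2 * qform p (mmult p (mmult p P (Sigma_hat X (Obs (\<pi> j)))) (mtransp P)) (col L j) - ln (col L j j))"
      using q cpos diff[unfolded col_def] unfolding diff Ob_def[symmetric] c_def[symmetric] w_def[symmetric] col_def
      by (simp add: field_simps)
  qed
qed

end
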